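(* Let $n\ge1$, $m\ge0$, let $\theta_1,\dots,\theta_n$ be real with $e^{i\theta_1},\dots,e^{i\theta_n}$ distinct, and let $\zeta_1(\boldsymbol\theta),\dots,\zeta_m(\boldsymbol\theta)$ depend smoothly on $\boldsymbol\theta=(\theta_1,\dots,\theta_n)$ and solve the stationary relations $$\sum_{j=1}^n\cot\Big(\frac{\zeta_k-\theta_j}{2}\Big)=\sum_{l\neq k}2\cot\Big(\frac{\zeta_k-\zeta_l}{2}\Big),\qquad k=1,\dots,m,$$ where the points $\xi_k=e^{i\zeta_k}$ are distinct, distinct from the $e^{i\theta_j}$, and the set $\{\xi_1,\dots,\xi_m\}$ is invariant under $\xi\mapsto1/\bar\xi$. Define $$\mathcal{Z}(\boldsymbol\theta)=\prod_{1\le j<k\le n}\sin^2\Big(\frac{\theta_j-\theta_k}{2}\Big)\prod_{1\le s<t\le m}\sin^8\Big(\frac{\zeta_s(\boldsymbol\theta)-\zeta_t(\boldsymbol\theta)}{2}\Big)\prod_{k=1}^n\prod_{l=1}^m\sin^{-4}\Big(\frac{\theta_k-\zeta_l(\boldsymbol\theta)}{2}\Big).$$ Then $\mathcal{Z}$ is strictly positive and rotation invariant. Moreover, with $\mathcal{U}=\log\mathcal{Z}$, the functions $$U_j(\boldsymbol\theta)=\partial_j\mathcal{U}=\sum_{k\neq j}\cot\Big(\frac{\theta_j-\theta_k}{2}\Big)-2\sum_{l=1}^m\cot\Big(\frac{\theta_j-\zeta_l(\boldsymbol\theta)}{2}\Big),\quad j=1,\dots,n,$$ are real-valued and rotation invariant,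 satisfy $\sum_{j=1}^nU_j=0$, and satisfy for each $j$ $$\frac12U_j^2+\sum_{k\neq j}\cot\Big(\frac{\theta_k-\theta_j}{2}\Big)U_k-\sum_{k\neq j}\frac{3}{2\sin^2\big(\frac{\theta_j-\theta_k}{2}\big)}=-\frac{(2m-n)^2}{2}+\frac12 .$$
   Context: Rotation invariance of a function $G(\boldsymbol\theta)$ means $G(\theta_1+c,\dots,\theta_n+c)=G(\boldsymbol\theta)$ for real $c$ (the solution $\boldsymbol\zeta$ shifts accordingly, $\zeta_k(\boldsymbol\theta+c)=\zeta_k(\boldsymbol\theta)+c$). The condition that $\{e^{i\zeta_k}\}$ is invariant under $\xi\mapsto1/\bar\xi$ means the $\zeta_k$ (mod $2\pi$) occur as real numbers or in complex conjugate pairs. *)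

theory Defs
  imports "HOL-Analysis.Analysis"
begin

fun Ck_on :: "nat \<Rightarrow> 'a::euclidean_space set \<Rightarrow> ('a \<Rightarrow> 'b::real_normed_vector) \<Rightarrow> bool" where
  "Ck_on 0 S f = continuous_on S f"
| "Ck_on (Suc k) S f = (f differentiable_on S \<and>
      (\<forall>i\<in>Basis. Ck_on k S (\<lambda>x. frechet_derivative f (at x) i)))"

definition smooth_on :: "'a::euclidean_space set \<Rightarrow> ('a \<Rightarrow> 'b::real_normed_vector) \<Rightarrow> bool" where
  "smooth_on S f = (\<forall>k. Ck_on k S f)"

definition rot :: "real \<Rightarrow> real^'n \<Rightarrow> real^'n" where
  "rot c \<theta> = \<theta> + (\<chi> i. c)"

definition Zfun :: "nat \<Rightarrow> (real^('n::{finite,linorder}) \<Rightarrow> nat \<Rightarrow> complex) \<Rightarrow> real^('n::{finite,linorder}) \<Rightarrow> complex" where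
  "Zfun m \<zeta> \<theta> =
     (\<Prod>p\<in>{(j,k). j < k}. complex_of_real ((sin ((\<theta>$fst p - \<theta>$snd p) / 2))^2))
   * (\<Prod>p\<in>{(s,t). s < t \<and> t < m}. (sin ((\<zeta> \<theta> (fst p) - \<zeta> \<theta> (snd p)) / 2))^8)
   * (\<Prod>k\<in>UNIV. \<Prod>l<m. inverse ((sin ((complex_of_real (\<theta>$k) - \<zeta> \<theta> l) / 2))^4))"

definition Ufun :: "nat \<Rightarrow> (real^('n::finite) \<Rightarrow> nat \<Rightarrow> complex) \<Rightarrow> real^('n::finite) \<Rightarrow> ('n::finite) \<Rightarrow> complex" where
  "Ufun m \<zeta> \<theta> j =
     (\<Sum>k\<in>UNIV-{j}. complex_of_real (cot ((\<theta>$j - \<theta>$k) / 2)))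
     - 2 * (\<Sum>l<m. cot ((complex_of_real (\<theta>$j) - \<zeta> \<theta> l) / 2))"

end

theory Submission
  imports Defs
begin

lemma exp_half_facts:
  fixes a :: complex
  shows "exp (\<i>*a) = exp (\<i>*a/2) ^ 2" "exp (-(\<i>*a/2)) = inverse (exp (\<i>*a/2))"
  by (simp_all add: exp_minus flip: exp_of_nat_mult)

lemma cot_exp:
  fixes a b :: complex
  shows "cot ((a-b)/2) = \<i>*(exp(\<i>*a)+exp(\<i>*b))/(exp(\<i>*a)-exp(\<i>*b))"
proof -
  define p where "p = exp (\<i>*a/2)"
  define q where "q = exp (\<i>*b/2)"
  have p0: "p \<noteq> 0" and q0: "q \<noteq> 0" by (auto simp: p_def q_def)
  have e1: "exp (\<i>*((a-b)/2)) = p/q" by (simp add: p_def q_def right_diff_distrib diff_divide_distrib exp_diff)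
  have e2: "exp (-(\<i>*((a-b)/2))) = q/p" by (simp add: p_def q_def right_diff_distrib diff_divide_distrib exp_diff exp_minus)
  have ea: "exp(\<i>*a) = p^2" "exp(\<i>*b) = q^2" by (simp_all add: p_def q_def exp_half_facts(1))
  show ?thesis
  proof (cases "p^2 = q^2")
    case True
    then show ?thesis unfolding cot_def sin_exp_eq cos_exp_eq e1 e2 ea using p0 q0
      by (simp add: field_simps power2_eq_square)
  next
    case False
    then have "p*p - q*q \<noteq> 0" by (simp add: power2_eq_square)
    then show ?thesis unfolding cot_def sin_exp_eq cos_exp_eq e1 e2 ea using p0 q0
      by (simp add: field_simps power2_eq_square)
  qed
qed

lemma sin2_exp:
  fixes a b :: complex
  shows "sin ((a-b)/2)^2 = -((exp(\<i>*a)-exp(\<i>*b))^2/(4*exp(\<i>*a)*exp(\<i>*b)))"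
proof -
  define p where "p = exp (\<i>*a/2)"
  define q where "q = exp (\<i>*b/2)"
  have p0: "p \<noteq> 0" and q0: "q \<noteq> 0" by (auto simp: p_def q_def)
  have e1: "exp (\<i>*((a-b)/2)) = p/q" by (simp add: p_def q_def right_diff_distrib diff_divide_distrib exp_diff)
  have e2: "exp (-(\<i>*((a-b)/2))) = q/p" by (simp add: p_def q_def right_diff_distrib diff_divide_distrib exp_diff exp_minus)
  have ea: "exp(\<i>*a) = p^2" "exp(\<i>*b) = q^2" by (simp_all add: p_def q_def exp_half_facts(1))
  show ?thesis unfolding sin_exp_eq e1 e2 ea using p0 q0
    by (simp add: field_simps power2_eq_square)
qed

lemma cot_triple:
  fixes x y z :: complex
  assumes "exp(\<i>*x) \<noteq> exp(\<i>*y)" "exp(\<i>*y) \<noteq> exp(\<i>*z)" "exp(\<i>*z) \<noteq> exp(\<i>*x)"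
  shows "cot((x-y)/2)*cot((y-z)/2) + cot((y-z)/2)*cot((z-x)/2) + cot((z-x)/2)*cot((x-y)/2) = 1"
proof -
  define X where "X = exp(\<i>*x)"
  define Y where "Y = exp(\<i>*y)"
  define Z where "Z = exp(\<i>*z)"
  have "X - Y \<noteq> 0" "Y - Z \<noteq> 0" "Z - X \<noteq> 0" using assms by (auto simp: X_def Y_def Z_def)
  then show ?thesis
  proof -
    have d: "(X-Y)*(Y-Z)*(Z-X) \<noteq> 0" using \<open>X - Y \<noteq> 0\<close> \<open>Y - Z \<noteq> 0\<close> \<open>Z - X \<noteq> 0\<close> by simp
    have "(\<i>*(X+Y)/(X-Y))*(\<i>*(Y+Z)/(Y-Z)) + (\<i>*(Y+Z)/(Y-Z))*(\<i>*(Z+X)/(Z-X)) + (\<i>*(Z+X)/(Z-X))*(\<i>*(X+Y)/(X-Y))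
      = (-(X+Y)*(Y+Z)*(Z-X) - (Y+Z)*(Z+X)*(X-Y) - (Z+X)*(X+Y)*(Y-Z)) / ((X-Y)*(Y-Z)*(Z-X))"
      using \<open>X - Y \<noteq> 0\<close> \<open>Y - Z \<noteq> 0\<close> \<open>Z - X \<noteq> 0\<close>
      by (simp add: divide_simps) (simp add: algebra_simps)
    also have "... = 1" using d by (simp add: divide_simps) (simp add: algebra_simps)
    finally show ?thesis unfolding cot_exp X_def[symmetric] Y_def[symmetric] Z_def[symmetric] .
  qed
qed

lemma sin_half_nz:
  fixes a b :: complex
  assumes "exp(\<i>*a) \<noteq> exp(\<i>*b)"
  shows "sin ((a-b)/2) \<noteq> 0"
proof
  assume "sin ((a-b)/2) = 0"
  then have "sin ((a-b)/2)^2 = 0" by simp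
  then show False using assms unfolding sin2_exp by simp
qed

lemma inv_sin2_real:
  fixes r :: real
  assumes "sin r \<noteq> 0"
  shows "3 / (2 * (sin r)^2) = 3/2 * (1 + (cot r)^2)"
  using assms unfolding cot_def by (simp add: field_simps power_divide)

lemma cnj_cot_refl:
  fixes a b a' b' :: complex
  assumes "exp(\<i>*a') = 1/cnj(exp(\<i>*a))" "exp(\<i>*b') = 1/cnj(exp(\<i>*b))"
  shows "cnj (cot((a-b)/2)) = cot((a'-b')/2)"
proof -
  define X where "X = exp(\<i>*a')"
  define Y where "Y = exp(\<i>*b')"
  have X0: "X \<noteq> 0" and Y0: "Y \<noteq> 0" by (auto simp: X_def Y_def)
  have cx: "cnj (exp(\<i>*a)) = 1/X" using assms(1) X0 unfolding X_def by (simp add: field_simps)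
  have cy: "cnj (exp(\<i>*b)) = 1/Y" using assms(2) Y0 unfolding Y_def by (simp add: field_simps)
  show ?thesis
  proof (cases "X = Y")
    case True
    then show ?thesis unfolding cot_exp X_def[symmetric] Y_def[symmetric] complex_cnj_divide complex_cnj_mult complex_cnj_add complex_cnj_diff cx cy by simp
  next
    case False
    then have "X - Y \<noteq> 0" "Y - X \<noteq> 0" by auto
    then show ?thesis unfolding cot_exp X_def[symmetric] Y_def[symmetric] complex_cnj_divide complex_cnj_mult complex_cnj_add complex_cnj_diff cx cy
      using X0 Y0 by (simp add: field_simps)
  qed
qed

lemma cnj_sin2_refl:
  fixes a b a' b' :: complex
  assumes "exp(\<i>*a') = 1/cnj(exp(\<i>*a))" "exp(\<i>*b') = 1/cnj(exp(\<i>*b))"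
  shows "cnj (sin((a-b)/2)^2) = sin((a'-b')/2)^2"
proof -
  define X where "X = exp(\<i>*a')"
  define Y where "Y = exp(\<i>*b')"
  have X0: "X \<noteq> 0" and Y0: "Y \<noteq> 0" by (auto simp: X_def Y_def)
  have cx: "cnj (exp(\<i>*a)) = 1/X" using assms(1) X0 unfolding X_def by (simp add: field_simps)
  have cy: "cnj (exp(\<i>*b)) = 1/Y" using assms(2) Y0 unfolding Y_def by (simp add: field_simps)
  show ?thesis unfolding sin2_exp X_def[symmetric] Y_def[symmetric] complex_cnj_divide complex_cnj_mult complex_cnj_minus complex_cnj_power complex_cnj_diff cx cy
      using X0 Y0 by (simp add: field_simps) (simp add: algebra_simps power2_eq_square)
qed

lemma exp_real_refl:
  fixes t :: real
  shows "exp(\<i>*complex_of_real t) = 1/cnj(exp(\<i>*complex_of_real t))"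
  by (simp add: exp_cnj exp_minus divide_inverse)

lemma sum_if_eq0:
  fixes g :: "'a \<Rightarrow> 'b::ab_group_add"
  assumes "finite K" "k \<in> K"
  shows "(\<Sum>i\<in>K. if i = k then 0 else g i) = (\<Sum>i\<in>K. g i) - g k"
proof -
  have "(\<Sum>i\<in>K. g i) = (\<Sum>i\<in>K. (if i = k then 0 else g i) + (if i = k then g k else 0))"
    by (rule sum.cong) auto
  also have "... = (\<Sum>i\<in>K. if i = k then 0 else g i) + g k"
    using assms by (simp add: sum.distrib)
  finally show ?thesis by simp
qed

lemma key_identity:
  fixes A :: "'n::finite \<Rightarrow> 'n \<Rightarrow> complex" and B :: "'n \<Rightarrow> nat \<Rightarrow> complex"
    and C :: "nat \<Rightarrow> nat \<Rightarrow> complex" and j :: 'n and m :: nat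
  assumes Aanti: "\<And>a b. A b a = - A a b"
  and Canti: "\<And>l t. C t l = - C l t"
  and T1: "\<And>k i. k \<noteq> j \<Longrightarrow> i \<noteq> j \<Longrightarrow> i \<noteq> k \<Longrightarrow> A j k * A k i + A k i * (- A j i) + (- A j i) * A j k = 1"
  and T2: "\<And>k l. k \<noteq> j \<Longrightarrow> l < m \<Longrightarrow> A j k * B k l + B k l * (- B j l) + (- B j l) * A j k = 1"
  and T3: "\<And>l t. l < m \<Longrightarrow> t < m \<Longrightarrow> l \<noteq> t \<Longrightarrow> B j l * C l t + C l t * (- B j t) + (- B j t) * B j l = 1"
  and stat: "\<And>l. l < m \<Longrightarrow> (\<Sum>k\<in>UNIV. B k l) = -2 * (\<Sum>t<m. C l t)"
  and Udef: "\<And>k. U k = (\<Sum>i\<in>UNIV. A k i) - 2 * (\<Sum>l<m. B k l)"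
  shows "(1/2) * (U j)^2 - (\<Sum>k\<in>UNIV-{j}. A j k * U k) - (\<Sum>k\<in>UNIV-{j}. 3/2*(1 + (A j k)^2))
     = 1/2 - (2* of_nat m - of_nat CARD('n))^2/2"
proof -
  define K where "K = UNIV - {j}"
  have fK: "finite K" by (simp add: K_def)
  have A0: "\<And>a. A a a = 0"
  proof -
    fix a have "A a a = - A a a" using Aanti[of a a] .
    then show "A a a = 0" by (simp add: eq_neg_iff_add_eq_0)
  qed
  have C0: "\<And>a. C a a = 0"
  proof -
    fix a have "C a a = - C a a" using Canti[of a a] .
    then show "C a a = 0" by (simp add: eq_neg_iff_add_eq_0)
  qed
  define N where "N = card K"
  have NC: "of_nat N = (of_nat CARD('n) - 1 :: complex)"
    unfolding N_def K_def by (simp add: card_Diff_singleton of_nat_diff)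
  define a where "a = (\<Sum>k\<in>UNIV. A j k)"
  define q where "q = (\<Sum>k\<in>K. (A j k)^2)"
  define b where "b = (\<Sum>l<m. B j l)"
  define r where "r = (\<Sum>l<m. (B j l)^2)"
  have splitU: "\<And>f::'n\<Rightarrow>complex. (\<Sum>k\<in>UNIV. f k) = f j + (\<Sum>k\<in>K. f k)"
    unfolding K_def by (simp add: sum.remove)
  have aK: "(\<Sum>k\<in>K. A j k) = a" unfolding a_def splitU by (simp add: A0)
  define D where "D = (\<Sum>k\<in>K. \<Sum>i\<in>K. A j k * A k i)"
  define M where "M = (\<Sum>k\<in>K. \<Sum>l<m. A j k * B k l)"
  define E where "E = (\<Sum>l<m. \<Sum>t<m. B j l * C l t)"
  have S1: "(\<Sum>k\<in>K. A j k * U k) = (\<Sum>k\<in>K. A j k * (\<Sum>i\<in>UNIV. A k i)) - 2 * M"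
    unfolding Udef M_def by (simp add: algebra_simps sum_subtractf sum_distrib_left)
  have S2: "(\<Sum>k\<in>K. A j k * (\<Sum>i\<in>UNIV. A k i)) = - q + D"
  proof -
    have "(\<Sum>k\<in>K. A j k * (\<Sum>i\<in>UNIV. A k i)) = (\<Sum>k\<in>K. (\<Sum>i\<in>K. A j k * A k i) - (A j k)^2)"
      by (rule sum.cong[OF refl], subst splitU) (simp add: power2_eq_square sum_distrib_left Aanti[of _ j] right_diff_distrib)
    then show ?thesis unfolding q_def D_def by (simp add: sum_subtractf)
  qed
  have S3: "2 * D = of_nat N ^ 2 + a^2 - of_nat N - q"
  proof -
    have "2 * D = (\<Sum>k\<in>K. \<Sum>i\<in>K. A j k * A k i + A j i * A i k)"
      unfolding D_def mult_2 by (subst (2) sum.swap) (simp add: sum.distrib)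
    also have "... = (\<Sum>k\<in>K. \<Sum>i\<in>K. if i = k then 0 else 1 + A j i * A j k)"
    proof (intro sum.cong refl)
      fix k i assume "k \<in> K" "i \<in> K"
      then have "k \<noteq> j" "i \<noteq> j" by (auto simp: K_def)
      show "A j k * A k i + A j i * A i k = (if i = k then 0 else 1 + A j i * A j k)"
      proof (cases "i = k")
        case True then show ?thesis by (simp add: A0)
      next
        case False
        have "A j k * A k i + A k i * (- A j i) + (- A j i) * A j k = 1" using T1[OF \<open>k\<noteq>j\<close> \<open>i\<noteq>j\<close> False] .
        then show ?thesis using False Aanti[of k i] by (simp add: algebra_simps)
      qed
    qed
    also have "... = (\<Sum>k\<in>K. (\<Sum>i\<in>K. 1 + A j i * A j k) - (1 + A j k * A j k))"
      by (rule sum.cong[OF refl]) (simp add: sum_if_eq0[OF fK])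
    also have "... = of_nat N * of_nat N + a * a - of_nat N - q"
      by (simp add: sum_subtractf sum.distrib N_def q_def aK power2_eq_square flip: sum_distrib_left sum_distrib_right)
    finally show ?thesis by (simp add: power2_eq_square)
  qed
  have S4: "M = of_nat N * of_nat m + (\<Sum>k\<in>K. \<Sum>l<m. B k l * B j l) + a * b"
  proof -
    have "M = (\<Sum>k\<in>K. \<Sum>l<m. 1 + B k l * B j l + A j k * B j l)"
      unfolding M_def
    proof (intro sum.cong refl)
      fix k l assume "k \<in> K" "l \<in> {..<m}"
      then have "k \<noteq> j" "l < m" by (auto simp: K_def)
      from T2[OF this] show "A j k * B k l = 1 + B k l * B j l + A j k * B j l" by (simp add: algebra_simps)
    qed
    also have "... = of_nat N * of_nat m + (\<Sum>k\<in>K. \<Sum>l<m. B k l * B j l) + a * b"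
      by (simp add: sum.distrib N_def aK b_def flip: sum_distrib_left sum_distrib_right)
    finally show ?thesis .
  qed
  have S5: "(\<Sum>k\<in>K. \<Sum>l<m. B k l * B j l) = -2 * E - r"
  proof -
    have "(\<Sum>k\<in>K. \<Sum>l<m. B k l * B j l) = (\<Sum>l<m. B j l * (\<Sum>k\<in>K. B k l))"
      by (subst sum.swap) (simp add: sum_distrib_left mult.commute)
    also have "... = (\<Sum>l<m. B j l * (-2 * (\<Sum>t<m. C l t)) - B j l * B j l)"
    proof (rule sum.cong[OF refl])
      fix l assume "l \<in> {..<m}"
      then have "(\<Sum>k\<in>UNIV. B k l) = -2 * (\<Sum>t<m. C l t)" using stat by simp
      then have "B j l + (\<Sum>k\<in>K. B k l) = -2 * (\<Sum>t<m. C l t)" unfolding splitU .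
      then have "(\<Sum>k\<in>K. B k l) = -2 * (\<Sum>t<m. C l t) - B j l" by (metis add_diff_cancel_left')
      then show "B j l * (\<Sum>k\<in>K. B k l) = B j l * (-2 * (\<Sum>t<m. C l t)) - B j l * B j l"
        by (simp add: right_diff_distrib)
    qed
    also have "... = -2 * E - r"
      by (simp add: E_def r_def sum_subtractf power2_eq_square sum_distrib_left algebra_simps)
    finally show ?thesis .
  qed
  have S6: "2 * E = of_nat m ^ 2 + b^2 - of_nat m - r"
  proof -
    have "2 * E = (\<Sum>l<m. \<Sum>t<m. B j l * C l t + B j t * C t l)"
      unfolding E_def mult_2 by (subst (2) sum.swap) (simp add: sum.distrib)
    also have "... = (\<Sum>l<m. \<Sum>t<m. if t = l then 0 else 1 + B j t * B j l)"
    proof (intro sum.cong refl)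
      fix l t assume "l \<in> {..<m}" "t \<in> {..<m}"
      then have "l < m" "t < m" by auto
      show "B j l * C l t + B j t * C t l = (if t = l then 0 else 1 + B j t * B j l)"
      proof (cases "t = l")
        case True then show ?thesis by (simp add: C0)
      next
        case False
        then have "l \<noteq> t" by simp
        from T3[OF \<open>l<m\<close> \<open>t<m\<close> this] show ?thesis using False Canti[of l t] by (simp add: algebra_simps)
      qed
    qed
    also have "... = (\<Sum>l<m. (\<Sum>t<m. 1 + B j t * B j l) - (1 + B j l * B j l))"
      by (rule sum.cong[OF refl]) (simp add: sum_if_eq0)
    also have "... = of_nat m * of_nat m + b * b - of_nat m - r"
      by (simp add: sum_subtractf sum.distrib b_def r_def power2_eq_square flip: sum_distrib_left sum_distrib_right)
    finally show ?thesis by (simp add: power2_eq_square)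
  qed
  have S7: "(\<Sum>k\<in>K. 3/2*(1 + (A j k)^2)) = 3/2 * of_nat N + 3/2 * q"
  proof -
    have "(\<Sum>k\<in>K. 3/2*(1 + (A j k)^2)) = 3/2 * (\<Sum>k\<in>K. (1 + (A j k)^2))" by (rule sum_distrib_left[symmetric])
    also have "... = 3/2 * (of_nat N + q)" by (simp add: sum.distrib q_def N_def)
    finally show ?thesis by (simp only: distrib_left)
  qed
  have Uj: "U j = a - 2 * b" unfolding Udef a_def b_def ..
  have D: "D = (of_nat N ^ 2 + a^2 - of_nat N - q) / 2" using S3 by (simp add: mult.commute)
  have E: "E = (of_nat m ^ 2 + b^2 - of_nat m - r) / 2" using S6 by (simp add: mult.commute)
  have "(1/2) * (U j)^2 - (\<Sum>k\<in>K. A j k * U k) - (\<Sum>k\<in>K. 3/2*(1 + (A j k)^2))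
     = (1/2) * (a - 2*b)^2 - (- q + D - 2 * (of_nat N * of_nat m + (-2 * E - r) + a * b)) - (3/2 * of_nat N + 3/2 * q)"
    unfolding S1 S2 S4 S5 S7 Uj ..
  also have "... = 1/2 - (2* of_nat m - (of_nat N + 1))^2/2"
    unfolding D E by (simp add: field_simps power2_eq_square)
  finally show ?thesis unfolding NC K_def by simp
qed

lemma pair_decomp:
  fixes I :: "'a::linorder set"
  defines "Lt \<equiv> {(a,b). a\<in>I \<and> b\<in>I \<and> a<b}"
  shows "I \<times> I = Lt \<union> (prod.swap ` Lt) \<union> ((\<lambda>a. (a,a)) ` I)"
    "Lt \<inter> prod.swap ` Lt = {}" "(Lt \<union> prod.swap ` Lt) \<inter> (\<lambda>a. (a,a)) ` I = {}"
  unfolding Lt_def by (auto simp: image_iff)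

lemma pair_sum:
  fixes g :: "'a::linorder \<times> 'a \<Rightarrow> 'b::comm_ring_1"
  assumes fin: "finite I" and gsym: "\<And>a b. g (b,a) = g (a,b)"
  shows "2 * (\<Sum>p\<in>{(a,b). a\<in>I \<and> b\<in>I \<and> a<b}. g p) = (\<Sum>a\<in>I. \<Sum>b\<in>I. g (a,b)) - (\<Sum>a\<in>I. g (a,a))"
proof -
  define Lt where "Lt = {(a,b). a\<in>I \<and> b\<in>I \<and> a<b}"
  have fL: "finite Lt" by (rule finite_subset[of _ "I \<times> I"]) (auto simp: Lt_def fin)
  have sw: "(\<Sum>p\<in>prod.swap ` Lt. g p) = (\<Sum>p\<in>Lt. g p)"
    by (subst sum.reindex) (auto simp: gsym intro!: sum.cong)
  have dg: "(\<Sum>p\<in>(\<lambda>a. (a,a)) ` I. g p) = (\<Sum>a\<in>I. g (a,a))"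
    by (subst sum.reindex) (auto simp: inj_on_def)
  have "(\<Sum>a\<in>I. \<Sum>b\<in>I. g (a,b)) = (\<Sum>p\<in>I \<times> I. g p)" using sum.cartesian_product[of "\<lambda>a b. g (a,b)" I I] by simp
  also have "... = (\<Sum>p\<in>Lt \<union> (prod.swap ` Lt) \<union> ((\<lambda>a. (a,a)) ` I). g p)"
    using pair_decomp(1)[of I] unfolding Lt_def by simp
  also have "... = (\<Sum>p\<in>Lt. g p) + (\<Sum>p\<in>prod.swap ` Lt. g p) + (\<Sum>p\<in>(\<lambda>a. (a,a)) ` I. g p)"
    using pair_decomp(2,3)[of I] fL fin unfolding Lt_def[symmetric]
    by (simp add: sum.union_disjoint)
  finally have eq: "(\<Sum>a\<in>I. \<Sum>b\<in>I. g (a,b)) = (\<Sum>p\<in>Lt. g p) + (\<Sum>p\<in>prod.swap ` Lt. g p) + (\<Sum>a\<in>I. g (a,a))"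
    unfolding dg .
  have "2 * (\<Sum>p\<in>Lt. g p) = (\<Sum>a\<in>I. \<Sum>b\<in>I. g (a,b)) - (\<Sum>a\<in>I. g (a,a))"
    unfolding eq sw by simp
  then show ?thesis by (simp only: Lt_def)
qed

lemma pair_prod:
  fixes g :: "'a::linorder \<times> 'a \<Rightarrow> 'b::comm_ring_1"
  assumes fin: "finite I" and gsym: "\<And>a b. g (b,a) = g (a,b)"
  shows "(\<Prod>p\<in>{(a,b). a\<in>I \<and> b\<in>I \<and> a<b}. g p)^2 * (\<Prod>a\<in>I. g (a,a)) = (\<Prod>a\<in>I. \<Prod>b\<in>I. g (a,b))"
proof -
  define Lt where "Lt = {(a,b). a\<in>I \<and> b\<in>I \<and> a<b}"
  have fL: "finite Lt" by (rule finite_subset[of _ "I \<times> I"]) (auto simp: Lt_def fin)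
  have sw: "(\<Prod>p\<in>prod.swap ` Lt. g p) = (\<Prod>p\<in>Lt. g p)"
    by (subst prod.reindex) (auto simp: gsym intro!: prod.cong)
  have dg: "(\<Prod>p\<in>(\<lambda>a. (a,a)) ` I. g p) = (\<Prod>a\<in>I. g (a,a))"
    by (subst prod.reindex) (auto simp: inj_on_def)
  have "(\<Prod>a\<in>I. \<Prod>b\<in>I. g (a,b)) = (\<Prod>p\<in>I \<times> I. g p)" using prod.cartesian_product[of "\<lambda>a b. g (a,b)" I I] by simp
  also have "... = (\<Prod>p\<in>Lt \<union> (prod.swap ` Lt) \<union> ((\<lambda>a. (a,a)) ` I). g p)"
    using pair_decomp(1)[of I] unfolding Lt_def by simp
  also have "... = (\<Prod>p\<in>Lt. g p) * (\<Prod>p\<in>prod.swap ` Lt. g p) * (\<Prod>p\<in>(\<lambda>a. (a,a)) ` I. g p)"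
    using pair_decomp(2,3)[of I] fL fin unfolding Lt_def[symmetric]
    by (simp add: prod.union_disjoint)
  finally have eq: "(\<Prod>a\<in>I. \<Prod>b\<in>I. g (a,b)) = (\<Prod>p\<in>Lt. g p) * (\<Prod>p\<in>prod.swap ` Lt. g p) * (\<Prod>a\<in>I. g (a,a))"
    unfolding dg .
  have "(\<Prod>p\<in>Lt. g p)^2 * (\<Prod>a\<in>I. g (a,a)) = (\<Prod>a\<in>I. \<Prod>b\<in>I. g (a,b))"
    unfolding eq sw by (simp add: power2_eq_square)
  then show ?thesis by (simp only: Lt_def)
qed

lemma cnj_sum_reindex:
  fixes f :: "'a \<Rightarrow> complex"
  assumes "bij_betw \<sigma> I I" "\<And>i. i \<in> I \<Longrightarrow> cnj (f i) = f (\<sigma> i)"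
  shows "Im (\<Sum>i\<in>I. f i) = 0"
proof -
  have "cnj (\<Sum>i\<in>I. f i) = (\<Sum>i\<in>I. f (\<sigma> i))" using assms(2) by simp
  also have "... = (\<Sum>i\<in>I. f i)" using sum.reindex_bij_betw[OF assms(1)] .
  finally show ?thesis using Reals_cnj_iff complex_is_Real_iff by blast
qed

lemma cnj_prod_reindex:
  fixes f :: "'a \<Rightarrow> complex"
  assumes "bij_betw \<sigma> I I" "\<And>i. i \<in> I \<Longrightarrow> cnj (f i) = f (\<sigma> i)"
  shows "Im (\<Prod>i\<in>I. f i) = 0"
proof -
  have "cnj (\<Prod>i\<in>I. f i) = (\<Prod>i\<in>I. f (\<sigma> i))" using assms(2) by simp
  also have "... = (\<Prod>i\<in>I. f i)" using prod.reindex_bij_betw[OF assms(1)] .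
  finally show ?thesis using Reals_cnj_iff complex_is_Real_iff by blast
qed

lemma refl_perm:
  fixes z :: "nat \<Rightarrow> complex"
  assumes R: "(\<lambda>\<xi>. 1 / cnj \<xi>) ` {exp (\<i> * z k) | k. k < m} = {exp (\<i> * z k) | k. k < m}"
    and D: "\<And>k l. k < m \<Longrightarrow> l < m \<Longrightarrow> k \<noteq> l \<Longrightarrow> exp (\<i> * z k) \<noteq> exp (\<i> * z l)"
  obtains \<sigma> where "bij_betw \<sigma> {..<m} {..<m}" "\<And>k. k < m \<Longrightarrow> \<sigma> k < m"
    "\<And>k. k < m \<Longrightarrow> exp (\<i> * z (\<sigma> k)) = 1 / cnj (exp (\<i> * z k))"
proof -
  have ex: "\<exists>l. l < m \<and> exp (\<i> * z l) = 1 / cnj (exp (\<i> * z k))" if "k < m" for k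
  proof -
    have "1 / cnj (exp (\<i> * z k)) \<in> (\<lambda>\<xi>. 1 / cnj \<xi>) ` {exp (\<i> * z k) | k. k < m}"
      using that by blast
    then show ?thesis unfolding R by auto
  qed
  define \<sigma> where "\<sigma> k = (SOME l. l < m \<and> exp (\<i> * z l) = 1 / cnj (exp (\<i> * z k)))" for k
  have \<sigma>: "\<sigma> k < m \<and> exp (\<i> * z (\<sigma> k)) = 1 / cnj (exp (\<i> * z k))" if "k < m" for k
    unfolding \<sigma>_def using someI_ex[OF ex[OF that]] .
  have inj: "inj_on \<sigma> {..<m}"
  proof (rule inj_onI)
    fix k l assume kl: "k \<in> {..<m}" "l \<in> {..<m}" "\<sigma> k = \<sigma> l"
    then have "1 / cnj (exp (\<i> * z k)) = 1 / cnj (exp (\<i> * z l))" using \<sigma>[of k] \<sigma>[of l] by auto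
    then have "exp (\<i> * z k) = exp (\<i> * z l)" by simp
    then show "k = l" using D kl by auto
  qed
  have "\<sigma> ` {..<m} = {..<m}" by (rule endo_inj_surj) (use \<sigma> inj in auto)
  then have "bij_betw \<sigma> {..<m} {..<m}" using inj by (simp add: bij_betw_def)
  then show ?thesis using that \<sigma> by blast
qed

lemma anti_sum0:
  fixes f :: "'a \<Rightarrow> 'a \<Rightarrow> complex"
  assumes "\<And>a b. f b a = - f a b"
  shows "(\<Sum>a\<in>I. \<Sum>b\<in>I. f a b) = 0"
proof -
  have "(\<Sum>a\<in>I. \<Sum>b\<in>I. f a b) = (\<Sum>b\<in>I. \<Sum>a\<in>I. f a b)" by (rule sum.swap)
  also have "... = (\<Sum>b\<in>I. \<Sum>a\<in>I. - f b a)" by (intro sum.cong refl) (rule assms)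
  also have "... = - (\<Sum>a\<in>I. \<Sum>b\<in>I. f a b)" by (simp add: sum_negf)
  finally show ?thesis by (simp add: eq_neg_iff_add_eq_0)
qed

lemma sum_remove_diag:
  fixes f :: "'a \<Rightarrow> 'b::ab_group_add"
  assumes "finite I" "a \<in> I" "f a = 0"
  shows "(\<Sum>b\<in>I-{a}. f b) = (\<Sum>b\<in>I. f b)"
  using assms by (simp add: sum_diff1)

lemma LD_mult:
  fixes f g :: "real \<Rightarrow> complex"
  assumes "(f has_vector_derivative f 0 * L1) (at 0)" "(g has_vector_derivative g 0 * L2) (at 0)"
  shows "((\<lambda>t. f t * g t) has_vector_derivative (f 0 * g 0) * (L1 + L2)) (at 0)"
proof -
  have "((\<lambda>t. f t * g t) has_vector_derivative (f 0 * (g 0 * L2) + (f 0 * L1) * g 0)) (at 0)"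
    by (rule has_vector_derivative_mult[OF assms])
  moreover have "f 0 * (g 0 * L2) + (f 0 * L1) * g 0 = (f 0 * g 0) * (L1 + L2)" by (simp add: algebra_simps)
  ultimately show ?thesis by simp
qed

lemma LD_prod:
  fixes f :: "'i \<Rightarrow> real \<Rightarrow> complex"
  assumes "finite I" "\<And>i. i \<in> I \<Longrightarrow> (f i has_vector_derivative f i 0 * L i) (at 0)"
  shows "((\<lambda>t. \<Prod>i\<in>I. f i t) has_vector_derivative (\<Prod>i\<in>I. f i 0) * (\<Sum>i\<in>I. L i)) (at 0)"
  using assms
proof (induction I rule: finite_induct)
  case empty
  then show ?case by simp
next
  case (insert x F)
  have "((\<lambda>t. f x t * (\<Prod>i\<in>F. f i t)) has_vector_derivative (f x 0 * (\<Prod>i\<in>F. f i 0)) * (L x + (\<Sum>i\<in>F. L i))) (at 0)"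
    by (rule LD_mult) (use insert in auto)
  then show ?case using insert by simp
qed

lemma LD_sinpow:
  fixes w :: "real \<Rightarrow> complex"
  assumes w: "(w has_vector_derivative d) (at 0)" and s: "sin (w 0 / 2) \<noteq> 0"
  shows "((\<lambda>t. sin (w t / 2) ^ p) has_vector_derivative
           sin (w 0 / 2) ^ p * (of_nat p / 2 * cot (w 0 / 2) * d)) (at 0)"
proof -
  have g: "((\<lambda>x. sin (x / 2) ^ p) has_field_derivative (of_nat p * sin (w 0 / 2) ^ (p - 1) * (cos (w 0 / 2) * (1/2)))) (at (w 0))"
    by (auto intro!: derivative_eq_intros)
  have eq:  "d * (of_nat p * sin (w 0 / 2) ^ (p - 1) * (cos (w 0 / 2) * (1/2))) = sin (w 0 / 2) ^ p * (of_nat p / 2 * cot (w 0 / 2) * d)"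
  proof (cases p)
    case 0 then show ?thesis by simp
  next
    case (Suc q)
    then show ?thesis using s by (simp add: cot_def field_simps)
  qed
  have "(((\<lambda>x. sin (x / 2) ^ p) \<circ> w) has_vector_derivative d * (of_nat p * sin (w 0 / 2) ^ (p - 1) * (cos (w 0 / 2) * (1/2)))) (at 0)"
    by (rule field_vector_diff_chain_at[OF w g])
  then show ?thesis unfolding eq o_def .
qed

lemma LD_inverse:
  fixes f :: "real \<Rightarrow> complex"
  assumes "(f has_vector_derivative f 0 * L) (at 0)" "f 0 \<noteq> 0"
  shows "((\<lambda>t. inverse (f t)) has_vector_derivative inverse (f 0) * (- L)) (at 0)"
proof -
  have g: "((\<lambda>x. inverse x) has_field_derivative - (inverse (f 0) ^ Suc (Suc 0))) (at (f 0))"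
    by (rule DERIV_inverse[OF assms(2)])
  have eq: "(f 0 * L) * (- (inverse (f 0) ^ Suc (Suc 0))) = inverse (f 0) * (- L)"
    using assms(2) by (simp add: field_simps power2_eq_square)
  have "(((\<lambda>x. inverse x) \<circ> f) has_vector_derivative (f 0 * L) * (- (inverse (f 0) ^ Suc (Suc 0)))) (at 0)"
    by (rule field_vector_diff_chain_at[OF assms(1) g])
  then show ?thesis unfolding eq o_def .
qed

lemma LD_ln_Re:
  fixes Z :: "real \<Rightarrow> complex"
  assumes "(Z has_vector_derivative Z 0 * U) (at 0)" "Im (Z 0) = 0" "Re (Z 0) > 0"
  shows "((\<lambda>t. ln (Re (Z t))) has_real_derivative Re U) (at 0)"
proof -
  have "((\<lambda>t. Re (Z t)) has_vector_derivative Re (Z 0 * U)) (at 0)"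
    by (rule bounded_linear.has_vector_derivative[OF bounded_linear_Re assms(1)])
  then have d: "((\<lambda>t. Re (Z t)) has_real_derivative Re (Z 0) * Re U) (at 0)"
    using assms(2) by (simp add: has_real_derivative_iff_has_vector_derivative)
  have "((\<lambda>t. ln (Re (Z t))) has_real_derivative inverse (Re (Z 0)) * (Re (Z 0) * Re U)) (at 0)"
    using DERIV_chain2[OF DERIV_ln[OF assms(3)] d] by (simp add: mult.commute)
  moreover have "inverse (Re (Z 0)) * (Re (Z 0) * Re U) = Re U" using assms(3) by simp
  ultimately show ?thesis by simp
qed

lemma vd_line:
  fixes f :: "real^'n \<Rightarrow> complex"
  assumes "f differentiable (at x)"
  shows "((\<lambda>t. f (x + t *\<^sub>R v)) has_vector_derivative frechet_derivative f (at x) v) (at 0)"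
proof -
  have fd: "(f has_derivative frechet_derivative f (at x)) (at x)"
    using assms frechet_derivative_works by blast
  have g: "((\<lambda>t. x + t *\<^sub>R v) has_derivative (\<lambda>t. t *\<^sub>R v)) (at 0)"
    by (auto intro!: derivative_eq_intros)
  have "((f \<circ> (\<lambda>t. x + t *\<^sub>R v)) has_derivative (frechet_derivative f (at x) \<circ> (\<lambda>t. t *\<^sub>R v))) (at 0)"
    by (rule diff_chain_at[OF g]) (simp add: fd)
  moreover have "linear (frechet_derivative f (at x))"
    using fd has_derivative_linear by blast
  ultimately show ?thesis
    unfolding has_vector_derivative_def o_def by (simp add: linear_scale)
qed

lemma deriv_sum_identity:
  fixes A :: "'n::{finite,linorder} \<Rightarrow> 'n \<Rightarrow> complex" and B :: "'n \<Rightarrow> nat \<Rightarrow> complex"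
    and C :: "nat \<Rightarrow> nat \<Rightarrow> complex" and d :: "nat \<Rightarrow> complex" and j :: 'n
  assumes Aanti: "\<And>a b. A b a = - A a b" and Canti: "\<And>l t. C t l = - C l t"
    and stat: "\<And>l. l < m \<Longrightarrow> (\<Sum>k\<in>UNIV. B k l) = -2 * (\<Sum>t<m. C l t)"
  defines "\<delta> \<equiv> \<lambda>k. if k = j then (1::complex) else 0"
  shows "(\<Sum>p\<in>{(a,b). a < b}. A (fst p) (snd p) * (\<delta> (fst p) - \<delta> (snd p)))
       + (\<Sum>p\<in>{(s,t). s < t \<and> t < m}. 4 * C (fst p) (snd p) * (d (fst p) - d (snd p)))
       + (\<Sum>k\<in>UNIV. \<Sum>l<m. - (2 * B k l * (\<delta> k - d l)))
       = (\<Sum>b\<in>UNIV. A j b) - 2 * (\<Sum>l<m. B j l)"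
proof -
  have A0: "A a a = 0" for a using Aanti[of a a] by (simp add: eq_neg_iff_add_eq_0)
  have C0: "C a a = 0" for a using Canti[of a a] by (simp add: eq_neg_iff_add_eq_0)
  have s1: "2 * (\<Sum>p\<in>{(a,b). a < b}. A (fst p) (snd p) * (\<delta> (fst p) - \<delta> (snd p))) = 2 * (\<Sum>b\<in>UNIV. A j b)"
  proof -
    have e: "{(a,b). a < b} = {(a::'n,b). a\<in>UNIV \<and> b\<in>UNIV \<and> a<b}" by simp
    have "2 * (\<Sum>p\<in>{(a,b). a < b}. A (fst p) (snd p) * (\<delta> (fst p) - \<delta> (snd p)))
      = (\<Sum>a\<in>UNIV. \<Sum>b\<in>UNIV. A a b * (\<delta> a - \<delta> b)) - (\<Sum>a\<in>UNIV. A a a * (\<delta> a - \<delta> a))"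
    proof -
      define G where "G p = A (fst p) (snd p) * (\<delta> (fst p) - \<delta> (snd p))" for p
      have "2 * (\<Sum>p\<in>{(a::'n,b). a\<in>UNIV \<and> b\<in>UNIV \<and> a<b}. G p) = (\<Sum>a\<in>UNIV. \<Sum>b\<in>UNIV. G (a,b)) - (\<Sum>a\<in>UNIV. G (a,a))"
      proof (rule pair_sum)
        fix a b show "G (b,a) = G (a,b)" unfolding G_def using Aanti[of a b] by (simp add: algebra_simps)
      qed simp
      then show ?thesis unfolding e G_def by simp
    qed
    also have "... = (\<Sum>a\<in>UNIV. \<Sum>b\<in>UNIV. A a b * \<delta> a) - (\<Sum>a\<in>UNIV. \<Sum>b\<in>UNIV. A a b * \<delta> b)"
      by (simp add: right_diff_distrib sum_subtractf)
    also have "(\<Sum>a\<in>UNIV. \<Sum>b\<in>UNIV. A a b * \<delta> a) = (\<Sum>a\<in>UNIV. \<delta> a * (\<Sum>b\<in>UNIV. A a b))"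
      by (simp add: sum_distrib_left mult.commute)
    also have "... = (\<Sum>a\<in>UNIV. if a = j then (\<Sum>b\<in>UNIV. A a b) else 0)" by (rule sum.cong) (auto simp: \<delta>_def)
    also have "... = (\<Sum>b\<in>UNIV. A j b)" by simp
    also have "(\<Sum>a\<in>UNIV. \<Sum>b\<in>UNIV. A a b * \<delta> b) = - (\<Sum>b\<in>UNIV. A j b)"
    proof -
      have "(\<Sum>a\<in>UNIV. \<Sum>b\<in>UNIV. A a b * \<delta> b) = (\<Sum>a\<in>UNIV. A a j)"
        unfolding \<delta>_def by (simp add: if_distrib cong: if_cong)
      also have "... = (\<Sum>a\<in>UNIV. - A j a)" by (rule sum.cong[OF refl]) (rule Aanti)
      finally show ?thesis by (simp add: sum_negf)
    qed
    finally show ?thesis by simp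
  qed
  define E where "E = (\<Sum>s<m. d s * (\<Sum>t<m. C s t))"
  have s2: "2 * (\<Sum>p\<in>{(s,t). s < t \<and> t < m}. 4 * C (fst p) (snd p) * (d (fst p) - d (snd p))) = 2 * (4 * E)"
  proof -
    have e: "{(s,t). s < t \<and> t < m} = {(a,b). a\<in>{..<m} \<and> b\<in>{..<m} \<and> a<b}" by auto
    have "2 * (\<Sum>p\<in>{(s,t). s < t \<and> t < m}. 4 * C (fst p) (snd p) * (d (fst p) - d (snd p)))
      = (\<Sum>a<m. \<Sum>b<m. 4 * C a b * (d a - d b)) - (\<Sum>a<m. 4 * C a a * (d a - d a))"
    proof -
      define G where "G p = 4 * C (fst p) (snd p) * (d (fst p) - d (snd p))" for p
      have "2 * (\<Sum>p\<in>{(a,b). a\<in>{..<m} \<and> b\<in>{..<m} \<and> a<b}. G p) = (\<Sum>a\<in>{..<m}. \<Sum>b\<in>{..<m}. G (a,b)) - (\<Sum>a\<in>{..<m}. G (a,a))"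
      proof (rule pair_sum)
        fix a b show "G (b,a) = G (a,b)" unfolding G_def using Canti[of b a] by (simp add: algebra_simps)
      qed simp
      then show ?thesis unfolding e G_def by simp
    qed
    also have "... = 4 * ((\<Sum>a<m. \<Sum>b<m. C a b * d a) - (\<Sum>a<m. \<Sum>b<m. C a b * d b))"
      by (simp add: right_diff_distrib sum_subtractf sum_distrib_left algebra_simps)
    also have "(\<Sum>a<m. \<Sum>b<m. C a b * d a) = E" unfolding E_def by (simp add: sum_distrib_left mult.commute)
    also have "(\<Sum>a<m. \<Sum>b<m. C a b * d b) = - E"
    proof -
      have "(\<Sum>a<m. \<Sum>b<m. C a b * d b) = (\<Sum>b<m. \<Sum>a<m. C a b * d b)" by (rule sum.swap)
      also have "... = (\<Sum>b<m. \<Sum>a<m. - (C b a * d b))"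
      proof (intro sum.cong refl)
        fix b a show "C a b * d b = - (C b a * d b)" using Canti[of b a] by simp
      qed
      finally show ?thesis unfolding E_def by (simp add: sum_negf sum_distrib_left mult.commute)
    qed
    finally show ?thesis by simp
  qed
  have s3: "(\<Sum>k\<in>UNIV. \<Sum>l<m. - (2 * B k l * (\<delta> k - d l))) = 2 * (-2 * E - (\<Sum>l<m. B j l))"
  proof -
    have "(\<Sum>k\<in>UNIV. \<Sum>l<m. - (2 * B k l * (\<delta> k - d l)))
       = 2 * ((\<Sum>k\<in>UNIV. \<Sum>l<m. B k l * d l) - (\<Sum>k\<in>UNIV. \<Sum>l<m. B k l * \<delta> k))"
      by (simp add: right_diff_distrib sum_subtractf sum_distrib_left algebra_simps)
    also have "(\<Sum>k\<in>UNIV. \<Sum>l<m. B k l * \<delta> k) = (\<Sum>k\<in>UNIV. \<delta> k * (\<Sum>l<m. B k l))"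
      by (simp add: sum_distrib_left mult.commute)
    also have "... = (\<Sum>k\<in>UNIV. if k = j then (\<Sum>l<m. B k l) else 0)" by (rule sum.cong) (auto simp: \<delta>_def)
    also have "... = (\<Sum>l<m. B j l)" by simp
    also have "(\<Sum>k\<in>UNIV. \<Sum>l<m. B k l * d l) = (\<Sum>l<m. d l * (\<Sum>k\<in>UNIV. B k l))"
      by (subst sum.swap) (simp add: sum_distrib_left mult.commute)
    also have "... = (\<Sum>l<m. d l * (-2 * (\<Sum>t<m. C l t)))" by (rule sum.cong) (auto simp: stat)
    also have "... = -2 * E" unfolding E_def by (simp add: sum_distrib_left algebra_simps)
    finally show ?thesis .
  qed
  have t1: "(\<Sum>p\<in>{(a,b). a < b}. A (fst p) (snd p) * (\<delta> (fst p) - \<delta> (snd p))) = (\<Sum>b\<in>UNIV. A j b)"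
    using s1 by simp
  have t2: "(\<Sum>p\<in>{(s,t). s < t \<and> t < m}. 4 * C (fst p) (snd p) * (d (fst p) - d (snd p))) = 4 * E"
    using s2 by simp
  show ?thesis unfolding t1 t2 s3 by (simp add: algebra_simps)
qed

lemma cot_swap: "cot ((x - y)/2) = - cot ((y - x)/2)" for x y :: "'a::{real_normed_field,banach}"
  by (metis cot_minus minus_diff_eq minus_divide_left)

lemma sin_swap_sq: "sin ((x - y)/2) ^ 2 = sin ((y - x)/2) ^ 2" for x y :: "'a::{real_normed_field,banach}"
  by (metis minus_diff_eq minus_divide_left sin_minus power2_minus)

theorem mainTheorem3:
  fixes S :: "(real^('n::{finite,linorder})) set"
    and m :: nat
    and \<zeta> :: "real^('n::{finite,linorder}) \<Rightarrow> nat \<Rightarrow> complex"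
  assumes S_open: "open S"
    and S_rot: "\<And>\<theta> c. \<theta> \<in> S \<Longrightarrow> rot c \<theta> \<in> S"
    and smooth: "\<And>k. k < m \<Longrightarrow> smooth_on S (\<lambda>\<theta>. \<zeta> \<theta> k)"
    and shift: "\<And>\<theta> c k. \<theta> \<in> S \<Longrightarrow> k < m \<Longrightarrow> \<zeta> (rot c \<theta>) k = \<zeta> \<theta> k + complex_of_real c"
    and dist_theta: "\<And>\<theta> j k. \<theta> \<in> S \<Longrightarrow> j \<noteq> k \<Longrightarrow>
          exp (\<i> * complex_of_real (\<theta>$j)) \<noteq> exp (\<i> * complex_of_real (\<theta>$k))"
    and dist_xi: "\<And>\<theta> k l. \<theta> \<in> S \<Longrightarrow> k < m \<Longrightarrow> l < m \<Longrightarrow> k \<noteq> l \<Longrightarrow>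
          exp (\<i> * \<zeta> \<theta> k) \<noteq> exp (\<i> * \<zeta> \<theta> l)"
    and dist_xi_theta: "\<And>\<theta> k j. \<theta> \<in> S \<Longrightarrow> k < m \<Longrightarrow>
          exp (\<i> * \<zeta> \<theta> k) \<noteq> exp (\<i> * complex_of_real (\<theta>$j))"
    and stationary: "\<And>\<theta> k. \<theta> \<in> S \<Longrightarrow> k < m \<Longrightarrow>
          (\<Sum>j\<in>UNIV. cot ((\<zeta> \<theta> k - complex_of_real (\<theta>$j)) / 2))
          = (\<Sum>l\<in>{..<m}-{k}. 2 * cot ((\<zeta> \<theta> k - \<zeta> \<theta> l) / 2))"
    and reflect: "\<And>\<theta>. \<theta> \<in> S \<Longrightarrow>
          (\<lambda>\<xi>. 1 / cnj \<xi>) ` {exp (\<i> * \<zeta> \<theta> k) | k. k < m} = {exp (\<i> * \<zeta> \<theta> k) | k. k < m}"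
    and \<theta>S: "\<theta> \<in> S"
  shows "Im (Zfun m \<zeta> \<theta>) = 0 \<and> Re (Zfun m \<zeta> \<theta>) > 0
    \<and> (\<forall>c. Zfun m \<zeta> (rot c \<theta>) = Zfun m \<zeta> \<theta>)
    \<and> (\<forall>j. ((\<lambda>t. ln (Re (Zfun m \<zeta> (\<theta> + t *\<^sub>R axis j 1))))
              has_real_derivative Re (Ufun m \<zeta> \<theta> j)) (at 0))
    \<and> (\<forall>j. Im (Ufun m \<zeta> \<theta> j) = 0)
    \<and> (\<forall>j c. Ufun m \<zeta> (rot c \<theta>) j = Ufun m \<zeta> \<theta> j)
    \<and> (\<Sum>j\<in>UNIV. Ufun m \<zeta> \<theta> j) = 0
    \<and> (\<forall>j. (1/2) * (Ufun m \<zeta> \<theta> j)^2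
           + (\<Sum>k\<in>UNIV-{j}. complex_of_real (cot ((\<theta>$k - \<theta>$j) / 2)) * Ufun m \<zeta> \<theta> k)
           - (\<Sum>k\<in>UNIV-{j}. complex_of_real (3 / (2 * (sin ((\<theta>$j - \<theta>$k) / 2))^2)))
         = complex_of_real (1/2 - (real_of_int (2 * int m - int (card (UNIV :: 'n set))))^2 / 2))"
proof -
  define z where "z = \<zeta> \<theta>"
  define n where "n = CARD('n)"
  have d\<theta>: "\<And>j k. j \<noteq> k \<Longrightarrow> exp (\<i> * complex_of_real (\<theta>$j)) \<noteq> exp (\<i> * complex_of_real (\<theta>$k))"
    using dist_theta[OF \<theta>S] .
  have dz: "\<And>k l. k < m \<Longrightarrow> l < m \<Longrightarrow> k \<noteq> l \<Longrightarrow> exp (\<i> * z k) \<noteq> exp (\<i> * z l)"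
    using dist_xi[OF \<theta>S] unfolding z_def .
  have dz\<theta>: "\<And>k j. k < m \<Longrightarrow> exp (\<i> * z k) \<noteq> exp (\<i> * complex_of_real (\<theta>$j))"
    using dist_xi_theta[OF \<theta>S] unfolding z_def .
  have d\<theta>z: "\<And>k j. k < m \<Longrightarrow> exp (\<i> * complex_of_real (\<theta>$j)) \<noteq> exp (\<i> * z k)"
    using dz\<theta> by metis
  obtain \<sigma> where \<sigma>bij: "bij_betw \<sigma> {..<m} {..<m}" and \<sigma>m: "\<And>k. k < m \<Longrightarrow> \<sigma> k < m"
     and \<sigma>e: "\<And>k. k < m \<Longrightarrow> exp (\<i> * z (\<sigma> k)) = 1 / cnj (exp (\<i> * z k))"
    using refl_perm[OF reflect[OF \<theta>S, folded z_def] dz] by blast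
  define A where "A j k = complex_of_real (cot ((\<theta>$j - \<theta>$k)/2))" for j k
  define B where "B j l = cot ((complex_of_real (\<theta>$j) - z l)/2)" for j l
  define C where "C l t = cot ((z l - z t)/2)" for l t
  have Ac: "A j k = cot ((complex_of_real (\<theta>$j) - complex_of_real (\<theta>$k))/2)" for j k
    unfolding A_def cot_of_real by simp
  have s\<theta>c: "sin ((complex_of_real (\<theta>$j) - complex_of_real (\<theta>$k))/2) \<noteq> 0" if "j \<noteq> k" for j k
    by (rule sin_half_nz[OF d\<theta>[OF that]])
  have s\<theta>: "sin ((\<theta>$j - \<theta>$k)/2) \<noteq> 0" if "j \<noteq> k" for j k
  proof -
    have "complex_of_real (sin ((\<theta>$j - \<theta>$k)/2)) = sin ((complex_of_real (\<theta>$j) - complex_of_real (\<theta>$k))/2)"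
      by (simp flip: sin_of_real)
    then show ?thesis using s\<theta>c[OF that] by auto
  qed
  have szc: "sin ((z s - z t)/2) \<noteq> 0" if "s < m" "t < m" "s \<noteq> t" for s t
    by (rule sin_half_nz[OF dz[OF that]])
  have s\<theta>z: "sin ((complex_of_real (\<theta>$k) - z l)/2) \<noteq> 0" if "l < m" for k l
    by (rule sin_half_nz) (metis dz\<theta>[OF that])
  have Aanti: "A b a = - A a b" for a b unfolding A_def by (subst cot_swap) simp
  have Canti: "C t l = - C l t" for l t unfolding C_def by (subst cot_swap) simp
  have A0: "A a a = 0" for a unfolding A_def by simp
  have C0: "C a a = 0" for a unfolding C_def by simp
  have Bswap: "cot ((z l - complex_of_real (\<theta>$k))/2) = - B k l" for k l unfolding B_def by (subst cot_swap) simp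
  have Ufun_eq: "Ufun m \<zeta> \<theta> k = (\<Sum>i\<in>UNIV. A k i) - 2 * (\<Sum>l<m. B k l)" for k
  proof -
    have "(\<Sum>i\<in>UNIV-{k}. A k i) = (\<Sum>i\<in>UNIV. A k i)" by (rule sum_remove_diag) (auto simp: A0)
    then show ?thesis unfolding Ufun_def A_def B_def z_def by simp
  qed
  have stat: "(\<Sum>k\<in>UNIV. B k l) = -2 * (\<Sum>t<m. C l t)" if "l < m" for l
  proof -
    have "(\<Sum>k\<in>UNIV. cot ((z l - complex_of_real (\<theta>$k))/2)) = (\<Sum>t\<in>{..<m}-{l}. 2 * C l t)"
      using stationary[OF \<theta>S that] unfolding z_def C_def .
    also have "... = (\<Sum>t<m. 2 * C l t)" by (rule sum_remove_diag) (use that in \<open>auto simp: C0\<close>)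
    finally have h: "- (\<Sum>k\<in>UNIV. B k l) = (\<Sum>t<m. 2 * C l t)" unfolding Bswap by (simp add: sum_negf)
    have "(\<Sum>t<m. 2 * C l t) = 2 * (\<Sum>t<m. C l t)" by (simp add: sum_distrib_left)
    with h show ?thesis by (metis minus_equation_iff mult_minus_left)
  qed
  have T1: "A j k * A k i + A k i * (- A j i) + (- A j i) * A j k = 1" if "k \<noteq> j" "i \<noteq> j" "i \<noteq> k" for j k i
  proof -
    have "cot((complex_of_real (\<theta>$j) - complex_of_real (\<theta>$k))/2) * cot((complex_of_real (\<theta>$k) - complex_of_real (\<theta>$i))/2)
      + cot((complex_of_real (\<theta>$k) - complex_of_real (\<theta>$i))/2) * cot((complex_of_real (\<theta>$i) - complex_of_real (\<theta>$j))/2)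
      + cot((complex_of_real (\<theta>$i) - complex_of_real (\<theta>$j))/2) * cot((complex_of_real (\<theta>$j) - complex_of_real (\<theta>$k))/2) = 1"
      by (rule cot_triple) (use d\<theta> that in auto)
    then show ?thesis unfolding Ac[symmetric] using Aanti[of j i] by simp
  qed
  have T2: "A j k * B k l + B k l * (- B j l) + (- B j l) * A j k = 1" if "k \<noteq> j" "l < m" for j k l
  proof -
    have "cot((complex_of_real (\<theta>$j) - complex_of_real (\<theta>$k))/2) * cot((complex_of_real (\<theta>$k) - z l)/2)
      + cot((complex_of_real (\<theta>$k) - z l)/2) * cot((z l - complex_of_real (\<theta>$j))/2)
      + cot((z l - complex_of_real (\<theta>$j))/2) * cot((complex_of_real (\<theta>$j) - complex_of_real (\<theta>$k))/2) = 1"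
      by (rule cot_triple) (use d\<theta> dz\<theta> d\<theta>z that in auto)
    then show ?thesis unfolding Ac[symmetric] Bswap B_def[symmetric] by simp
  qed
  have T3: "B j l * C l t + C l t * (- B j t) + (- B j t) * B j l = 1" if "l < m" "t < m" "l \<noteq> t" for j l t
  proof -
    have "cot((complex_of_real (\<theta>$j) - z l)/2) * cot((z l - z t)/2)
      + cot((z l - z t)/2) * cot((z t - complex_of_real (\<theta>$j))/2)
      + cot((z t - complex_of_real (\<theta>$j))/2) * cot((complex_of_real (\<theta>$j) - z l)/2) = 1"
      by (rule cot_triple) (use dz dz\<theta> d\<theta>z that in auto)
    then show ?thesis unfolding Bswap B_def[symmetric] C_def[symmetric] by simp
  qed
  have G: "(1/2) * (Ufun m \<zeta> \<theta> j)^2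
           + (\<Sum>k\<in>UNIV-{j}. complex_of_real (cot ((\<theta>$k - \<theta>$j) / 2)) * Ufun m \<zeta> \<theta> k)
           - (\<Sum>k\<in>UNIV-{j}. complex_of_real (3 / (2 * (sin ((\<theta>$j - \<theta>$k) / 2))^2)))
         = complex_of_real (1/2 - (real_of_int (2 * int m - int (card (UNIV :: 'n set))))^2 / 2)" for j
  proof -
    have K: "(1/2) * (Ufun m \<zeta> \<theta> j)^2 - (\<Sum>k\<in>UNIV-{j}. A j k * Ufun m \<zeta> \<theta> k) - (\<Sum>k\<in>UNIV-{j}. 3/2*(1 + (A j k)^2))
       = 1/2 - (2 * of_nat m - of_nat CARD('n))^2/2"
      by (rule key_identity[where A=A and B=B and C=C and j=j and m=m], rule Aanti, rule Canti,
          rule T1, assumption+, rule T2, assumption+, rule T3, assumption+, rule stat, assumption, rule Ufun_eq)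
    have e1: "(\<Sum>k\<in>UNIV-{j}. complex_of_real (cot ((\<theta>$k - \<theta>$j) / 2)) * Ufun m \<zeta> \<theta> k) = - (\<Sum>k\<in>UNIV-{j}. A j k * Ufun m \<zeta> \<theta> k)"
      unfolding sum_negf[symmetric] by (rule sum.cong[OF refl]) (metis A_def Aanti mult_minus_left)
    have e2: "(\<Sum>k\<in>UNIV-{j}. complex_of_real (3 / (2 * (sin ((\<theta>$j - \<theta>$k) / 2))^2))) = (\<Sum>k\<in>UNIV-{j}. 3/2*(1 + (A j k)^2))"
    proof (rule sum.cong[OF refl])
      fix k assume "k \<in> UNIV-{j}"
      then have "j \<noteq> k" by auto
      then have "3 / (2 * (sin ((\<theta>$j - \<theta>$k)/2))^2) = 3/2 * (1 + (cot ((\<theta>$j - \<theta>$k)/2))^2)"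
        by (intro inv_sin2_real s\<theta>)
      then have "complex_of_real (3 / (2 * (sin ((\<theta>$j - \<theta>$k) / 2))^2)) = complex_of_real (3/2 * (1 + (cot ((\<theta>$j - \<theta>$k)/2))^2))"
        by (rule arg_cong)
      also have "... = 3/2*(1 + (A j k)^2)" unfolding A_def by simp
      finally show "complex_of_real (3 / (2 * (sin ((\<theta>$j - \<theta>$k) / 2))^2)) = 3/2*(1 + (A j k)^2)" .
    qed
    have e3: "complex_of_real (1/2 - (real_of_int (2 * int m - int (card (UNIV :: 'n set))))^2 / 2) = 1/2 - (2 * of_nat m - of_nat CARD('n))^2/2"
      by simp
    show ?thesis unfolding e1 e2 e3 K[symmetric] by simp
  qed
  have cnjB: "cnj (B j l) = B j (\<sigma> l)" if "l < m" for j l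
    unfolding B_def by (rule cnj_cot_refl[OF exp_real_refl \<sigma>e[OF that]])
  have ImU: "Im (Ufun m \<zeta> \<theta> j) = 0" for j
  proof -
    have "Im (\<Sum>l\<in>{..<m}. B j l) = 0" by (rule cnj_sum_reindex[OF \<sigma>bij]) (simp add: cnjB)
    then show ?thesis unfolding Ufun_def by (simp add: B_def z_def)
  qed
  have SumU: "(\<Sum>j\<in>UNIV. Ufun m \<zeta> \<theta> j) = 0"
  proof -
    have a: "(\<Sum>j\<in>UNIV. \<Sum>i\<in>UNIV. A j i) = 0" by (rule anti_sum0) (rule Aanti)
    have "(\<Sum>j\<in>UNIV. \<Sum>l<m. B j l) = (\<Sum>l<m. \<Sum>j\<in>UNIV. B j l)" by (rule sum.swap)
    also have "... = (\<Sum>l<m. -2 * (\<Sum>t<m. C l t))" by (rule sum.cong) (auto simp: stat)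
    also have "... = -2 * (\<Sum>l<m. \<Sum>t<m. C l t)" by (simp add: sum_distrib_left)
    also have "... = 0" by (simp add: anti_sum0[OF Canti])
    finally have b: "(\<Sum>j\<in>UNIV. \<Sum>l<m. B j l) = 0" .
    show ?thesis unfolding Ufun_eq by (simp add: sum_subtractf a b flip: sum_distrib_left)
  qed
  have r\<theta>: "(rot c \<theta>)$k = \<theta>$k + c" for c k by (simp add: rot_def)
  have rz: "\<zeta> (rot c \<theta>) l = \<zeta> \<theta> l + complex_of_real c" if "l < m" for c l using shift[OF \<theta>S that] .
  have RotU: "Ufun m \<zeta> (rot c \<theta>) j = Ufun m \<zeta> \<theta> j" for c j
    unfolding Ufun_def by (intro arg_cong2[where f="(-)"] arg_cong2[where f="(*)"] sum.cong refl) (auto simp: r\<theta> rz)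
  have RotZ: "Zfun m \<zeta> (rot c \<theta>) = Zfun m \<zeta> \<theta>" for c
    unfolding Zfun_def by (intro arg_cong2[where f="(*)"] prod.cong refl) (auto simp: r\<theta> rz)
  have \<sigma>inj: "\<sigma> s \<noteq> \<sigma> t" if "s < m" "t < m" "s \<noteq> t" for s t
    using \<sigma>bij that unfolding bij_betw_def inj_on_def by auto
  define P1 where "P1 = (\<Prod>p\<in>{(j,k). j < k}. complex_of_real ((sin ((\<theta>$fst p - \<theta>$snd p) / 2))^2))"
  define P2 where "P2 = (\<Prod>p\<in>{(s,t). s < t \<and> t < m}. (sin ((z (fst p) - z (snd p)) / 2))^8)"
  define P3 where "P3 = (\<Prod>k\<in>UNIV. \<Prod>l<m. inverse ((sin ((complex_of_real (\<theta>$k) - z l) / 2))^4))"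
  have Zsplit: "Zfun m \<zeta> \<theta> = P1 * P2 * P3" unfolding Zfun_def P1_def P2_def P3_def z_def ..
  define p1 where "p1 = (\<Prod>p\<in>{(j,k). j < k}. (sin ((\<theta>$fst p - \<theta>$snd p) / 2))^2)"
  have P1r: "P1 = complex_of_real p1" unfolding P1_def p1_def by simp
  have p1pos: "p1 > 0" unfolding p1_def
  proof (rule prod_pos)
    fix p :: "'n \<times> 'n" assume "p \<in> {(j,k). j < k}"
    then have "fst p \<noteq> snd p" by auto
    then show "0 < (sin ((\<theta>$fst p - \<theta>$snd p) / 2))^2" using s\<theta> by simp
  qed
  define h2 where "h2 s t = (if s = t then 1 else sin ((z s - z t)/2)^2)" for s t
  define Q where "Q = (\<Prod>s<m. \<Prod>t<m. h2 s t)"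
  have P2Q: "P2 = Q^2"
  proof -
    define g where "g p = (if fst p = snd p then 1 else sin ((z (fst p) - z (snd p))/2)^4)" for p :: "nat \<times> nat"
    have gs: "g (b,a) = g (a,b)" for a b
    proof -
      have p4: "\<And>x::complex. x^4 = (x^2)^2" by (simp flip: power_mult)
      show ?thesis unfolding g_def p4 using sin_swap_sq[of "z a" "z b"] by auto
    qed
    have pp: "(\<Prod>p\<in>{(a,b). a\<in>{..<m} \<and> b\<in>{..<m} \<and> a<b}. g p)^2 * (\<Prod>a\<in>{..<m}. g (a,a)) = (\<Prod>a\<in>{..<m}. \<Prod>b\<in>{..<m}. g (a,b))"
      by (rule pair_prod) (auto simp: gs)
    have st: "{(a,b). a\<in>{..<m} \<and> b\<in>{..<m} \<and> a<b} = {(s,t). s < t \<and> t < m}" by auto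
    have "(\<Prod>p\<in>{(s,t). s < t \<and> t < m}. g p)^2 = P2"
      unfolding P2_def prod_power_distrib by (rule prod.cong) (auto simp: g_def simp flip: power_mult)
    moreover have "(\<Prod>a\<in>{..<m}. g (a,a)) = 1" by (simp add: g_def)
    moreover have "(\<Prod>a\<in>{..<m}. \<Prod>b\<in>{..<m}. g (a,b)) = Q^2"
      unfolding Q_def prod_power_distrib by (intro prod.cong refl) (auto simp: g_def h2_def simp flip: power_mult)
    ultimately show ?thesis using pp unfolding st by simp
  qed
  have Qreal: "Im Q = 0"
  proof -
    have c: "cnj (h2 s t) = h2 (\<sigma> s) (\<sigma> t)" if "s < m" "t < m" for s t
    proof (cases "s = t")
      case True then show ?thesis by (simp add: h2_def)
    next
      case False
      then have "\<sigma> s \<noteq> \<sigma> t" using \<sigma>inj that by auto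
      moreover have "cnj (sin ((z s - z t)/2)^2) = sin ((z (\<sigma> s) - z (\<sigma> t))/2)^2"
        by (rule cnj_sin2_refl[OF \<sigma>e[OF that(1)] \<sigma>e[OF that(2)]])
      ultimately show ?thesis using False unfolding h2_def by simp
    qed
    have "cnj Q = (\<Prod>s<m. \<Prod>t<m. h2 (\<sigma> s) (\<sigma> t))" unfolding Q_def by (simp add: c)
    also have "... = (\<Prod>s<m. \<Prod>t<m. h2 (\<sigma> s) t)"
      by (rule prod.cong[OF refl]) (rule prod.reindex_bij_betw[OF \<sigma>bij])
    also have "... = Q" unfolding Q_def by (rule prod.reindex_bij_betw[OF \<sigma>bij, where g="\<lambda>s. \<Prod>t<m. h2 s t"])
    finally show ?thesis using Reals_cnj_iff complex_is_Real_iff by blast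
  qed
  have Qnz: "Q \<noteq> 0" unfolding Q_def h2_def using szc by (auto simp: prod_zero_iff)
  define R where "R k = (\<Prod>l<m. inverse ((sin ((complex_of_real (\<theta>$k) - z l) / 2))^2))" for k
  have P3R: "P3 = (\<Prod>k\<in>UNIV. (R k)^2)"
    unfolding P3_def R_def prod_power_distrib by (intro prod.cong refl) (simp flip: power_mult add: power_inverse)
  have Rreal: "Im (R k) = 0" for k unfolding R_def
  proof (rule cnj_prod_reindex[OF \<sigma>bij])
    fix l assume "l \<in> {..<m}"
    then have "cnj (sin ((complex_of_real (\<theta>$k) - z l)/2)^2) = sin ((complex_of_real (\<theta>$k) - z (\<sigma> l))/2)^2"
      by (intro cnj_sin2_refl[OF exp_real_refl \<sigma>e]) auto
    then show "cnj (inverse ((sin ((complex_of_real (\<theta>$k) - z l) / 2))^2)) = inverse ((sin ((complex_of_real (\<theta>$k) - z (\<sigma> l)) / 2))^2)"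
      by (simp only: complex_cnj_inverse)
  qed
  have Rnz: "R k \<noteq> 0" for k unfolding R_def using s\<theta>z by (auto simp: prod_zero_iff)
  define q where "q = Re Q"
  define rr where "rr k = Re (R k)" for k
  have Qq: "Q = complex_of_real q" using Qreal by (simp add: q_def complex_eq_iff)
  have Rr: "R k = complex_of_real (rr k)" for k using Rreal[of k] by (simp add: rr_def complex_eq_iff)
  have Zr: "Zfun m \<zeta> \<theta> = complex_of_real (p1 * q^2 * (\<Prod>k\<in>UNIV. (rr k)^2))"
    unfolding Zsplit P1r P2Q P3R Qq Rr by simp
  have Zpos: "p1 * q^2 * (\<Prod>k\<in>UNIV. (rr k)^2) > 0"
  proof -
    have "q \<noteq> 0" using Qnz Qq by auto
    moreover have "rr k \<noteq> 0" for k using Rnz[of k] Rr[of k] by auto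
    ultimately show ?thesis using p1pos by (auto intro!: mult_pos_pos prod_pos)
  qed
  have ImZ: "Im (Zfun m \<zeta> \<theta>) = 0" unfolding Zr by (rule Im_complex_of_real)
  have ReZ: "Re (Zfun m \<zeta> \<theta>) > 0" unfolding Zr Re_complex_of_real by (rule Zpos)
  have DZ: "((\<lambda>x. Zfun m \<zeta> (\<theta> + x *\<^sub>R axis j 1)) has_vector_derivative Zfun m \<zeta> \<theta> * Ufun m \<zeta> \<theta> j) (at 0)" for j
  proof -
    define e where "e = axis j (1::real)"
    define gt where "gt x = \<theta> + x *\<^sub>R e" for x
    define \<delta> where "\<delta> k = (if k = j then (1::complex) else 0)" for k
    have ge: "(gt x)$k = \<theta>$k + x * e$k" for x k by (simp add: gt_def)
    have g0: "gt 0 = \<theta>" by (simp add: gt_def)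
    have ek: "complex_of_real (e$k) = \<delta> k" for k by (simp add: e_def \<delta>_def axis_def)
    have diffz: "(\<lambda>x. \<zeta> x l) differentiable (at \<theta>)" if "l < m" for l
    proof -
      have "Ck_on (Suc 0) S (\<lambda>x. \<zeta> x l)" using smooth[OF that] unfolding smooth_on_def by blast
      then have "(\<lambda>x. \<zeta> x l) differentiable_on S" by simp
      then show ?thesis using differentiable_on_eq_differentiable_at[OF S_open] \<theta>S by blast
    qed
    define dl where "dl l = frechet_derivative (\<lambda>x. \<zeta> x l) (at \<theta>) e" for l
    have Dz: "((\<lambda>x. \<zeta> (gt x) l) has_vector_derivative dl l) (at 0)" if "l < m" for l
      unfolding gt_def dl_def by (rule vd_line[OF diffz[OF that]])
    have Dth: "((\<lambda>x. complex_of_real ((gt x)$k)) has_vector_derivative \<delta> k) (at 0)" for k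
    proof -
      have "((\<lambda>x. complex_of_real (\<theta>$k + x * e$k)) has_vector_derivative complex_of_real (e$k)) (at 0)"
        by (rule has_vector_derivative_of_real) (auto intro!: derivative_eq_intros)
      then show ?thesis unfolding ge ek .
    qed
    define F1 where "F1 p x = complex_of_real ((sin (((gt x)$fst p - (gt x)$snd p) / 2))^2)" for p x
    define F2 where "F2 p x = (sin ((\<zeta> (gt x) (fst p) - \<zeta> (gt x) (snd p)) / 2))^8" for p x
    define F3 where "F3 k l x = inverse ((sin ((complex_of_real ((gt x)$k) - \<zeta> (gt x) l) / 2))^4)" for k l x
    define PA where "PA = {(a::'n, b). a < b}"
    define PZ where "PZ = {(s, t). s < t \<and> t < m}"
    have Zeq: "(\<lambda>x. Zfun m \<zeta> (gt x)) = (\<lambda>x. (\<Prod>p\<in>PA. F1 p x) * (\<Prod>p\<in>PZ. F2 p x) * (\<Prod>k\<in>UNIV. \<Prod>l<m. F3 k l x))"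
      unfolding Zfun_def F1_def F2_def F3_def PA_def PZ_def ..
    define L1 where "L1 p = A (fst p) (snd p) * (\<delta> (fst p) - \<delta> (snd p))" for p
    define L2 where "L2 p = 4 * C (fst p) (snd p) * (dl (fst p) - dl (snd p))" for p
    define L3 where "L3 k l = - (2 * B k l * (\<delta> k - dl l))" for k l
    have D1: "(F1 p has_vector_derivative F1 p 0 * L1 p) (at 0)" if pA: "p \<in> PA" for p
    proof -
      obtain a b where p: "p = (a,b)" and ab: "a \<noteq> b" using pA unfolding PA_def by (cases p) auto
      define w where "w x = complex_of_real ((gt x)$a) - complex_of_real ((gt x)$b)" for x
      have w: "(w has_vector_derivative \<delta> a - \<delta> b) (at 0)" unfolding w_def by (intro has_vector_derivative_diff Dth)
      have w0: "w 0 = complex_of_real (\<theta>$a) - complex_of_real (\<theta>$b)" by (simp add: w_def g0)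
      have F: "F1 p = (\<lambda>x. sin (w x / 2) ^ 2)" unfolding F1_def p w_def by (rule ext) (simp flip: sin_of_real)
      have "((\<lambda>x. sin (w x / 2) ^ 2) has_vector_derivative sin (w 0 / 2) ^ 2 * (of_nat 2 / 2 * cot (w 0 / 2) * (\<delta> a - \<delta> b))) (at 0)"
        by (rule LD_sinpow[OF w]) (simp add: w0 s\<theta>c[OF ab])
      moreover have "of_nat 2 / 2 * cot (w 0 / 2) * (\<delta> a - \<delta> b) = L1 p" unfolding L1_def p w0 Ac by simp
      ultimately show ?thesis unfolding F by simp
    qed
    have D2: "(F2 p has_vector_derivative F2 p 0 * L2 p) (at 0)" if pZ: "p \<in> PZ" for p
    proof -
      obtain s t where p: "p = (s,t)" and st: "s < m" "t < m" "s \<noteq> t" using pZ unfolding PZ_def by (cases p) auto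
      define w where "w x = \<zeta> (gt x) s - \<zeta> (gt x) t" for x
      have w: "(w has_vector_derivative dl s - dl t) (at 0)" unfolding w_def by (intro has_vector_derivative_diff Dz st)
      have w0: "w 0 = z s - z t" by (simp add: w_def g0 z_def)
      have F: "F2 p = (\<lambda>x. sin (w x / 2) ^ 8)" unfolding F2_def p w_def by (rule ext) simp
      have "((\<lambda>x. sin (w x / 2) ^ 8) has_vector_derivative sin (w 0 / 2) ^ 8 * (of_nat 8 / 2 * cot (w 0 / 2) * (dl s - dl t))) (at 0)"
        by (rule LD_sinpow[OF w]) (simp add: w0 szc[OF st])
      moreover have "of_nat 8 / 2 * cot (w 0 / 2) * (dl s - dl t) = L2 p" unfolding L2_def p w0 C_def by simp
      ultimately show ?thesis unfolding F by simp
    qed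
    have D3: "(F3 k l has_vector_derivative F3 k l 0 * L3 k l) (at 0)" if "l < m" for k l
    proof -
      define w where "w x = complex_of_real ((gt x)$k) - \<zeta> (gt x) l" for x
      have w: "(w has_vector_derivative \<delta> k - dl l) (at 0)" unfolding w_def by (intro has_vector_derivative_diff Dth Dz that)
      have w0: "w 0 = complex_of_real (\<theta>$k) - z l" by (simp add: w_def g0 z_def)
      have sn: "sin (w 0 / 2) \<noteq> 0" by (simp add: w0 s\<theta>z[OF that])
      have f: "((\<lambda>x. sin (w x / 2) ^ 4) has_vector_derivative sin (w 0 / 2) ^ 4 * (of_nat 4 / 2 * cot (w 0 / 2) * (\<delta> k - dl l))) (at 0)"
        by (rule LD_sinpow[OF w sn])
      have h1: "((\<lambda>x. inverse (sin (w x / 2) ^ 4)) has_vector_derivative inverse (sin (w 0 / 2) ^ 4) * (- (of_nat 4 / 2 * cot (w 0 / 2) * (\<delta> k - dl l)))) (at 0)"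
        by (rule LD_inverse[OF f]) (simp add: sn)
      have h2: "- (of_nat 4 / 2 * cot (w 0 / 2) * (\<delta> k - dl l)) = L3 k l" unfolding L3_def w0 B_def by simp
      have h3: "F3 k l = (\<lambda>x. inverse (sin (w x / 2) ^ 4))" unfolding F3_def w_def by (rule ext) simp
      show ?thesis unfolding h3 using h1 unfolding h2 .
    qed
    have DP1: "((\<lambda>x. \<Prod>p\<in>PA. F1 p x) has_vector_derivative (\<Prod>p\<in>PA. F1 p 0) * (\<Sum>p\<in>PA. L1 p)) (at 0)"
      by (rule LD_prod) (auto simp: PA_def intro: D1[unfolded PA_def])
    have DP2: "((\<lambda>x. \<Prod>p\<in>PZ. F2 p x) has_vector_derivative (\<Prod>p\<in>PZ. F2 p 0) * (\<Sum>p\<in>PZ. L2 p)) (at 0)"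
    proof (rule LD_prod)
      show "finite PZ" unfolding PZ_def by (rule finite_subset[of _ "{..<m} \<times> {..<m}"]) auto
    qed (rule D2)
    have DP3: "((\<lambda>x. \<Prod>k\<in>UNIV. \<Prod>l<m. F3 k l x) has_vector_derivative (\<Prod>k\<in>UNIV. \<Prod>l<m. F3 k l 0) * (\<Sum>k\<in>UNIV. \<Sum>l<m. L3 k l)) (at 0)"
      by (rule LD_prod[where f="\<lambda>k x. \<Prod>l<m. F3 k l x", simplified]) (auto intro!: LD_prod D3)
    have DALL: "((\<lambda>x. (\<Prod>p\<in>PA. F1 p x) * (\<Prod>p\<in>PZ. F2 p x) * (\<Prod>k\<in>UNIV. \<Prod>l<m. F3 k l x)) has_vector_derivative
        ((\<Prod>p\<in>PA. F1 p 0) * (\<Prod>p\<in>PZ. F2 p 0) * (\<Prod>k\<in>UNIV. \<Prod>l<m. F3 k l 0)) * (((\<Sum>p\<in>PA. L1 p) + (\<Sum>p\<in>PZ. L2 p)) + (\<Sum>k\<in>UNIV. \<Sum>l<m. L3 k l))) (at 0)"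
      by (rule LD_mult[OF LD_mult[OF DP1 DP2] DP3, simplified])
    have Lsum: "((\<Sum>p\<in>PA. L1 p) + (\<Sum>p\<in>PZ. L2 p)) + (\<Sum>k\<in>UNIV. \<Sum>l<m. L3 k l) = Ufun m \<zeta> \<theta> j"
      unfolding L1_def L2_def L3_def PA_def PZ_def Ufun_eq \<delta>_def
      by (rule deriv_sum_identity[where A=A and B=B and C=C and d=dl and m=m and j=j], rule Aanti, rule Canti, rule stat, assumption)
    have Z0: "(\<Prod>p\<in>PA. F1 p 0) * (\<Prod>p\<in>PZ. F2 p 0) * (\<Prod>k\<in>UNIV. \<Prod>l<m. F3 k l 0) = Zfun m \<zeta> \<theta>"
      using fun_cong[OF Zeq, of 0] g0 by simp
    have "((\<lambda>x. Zfun m \<zeta> (gt x)) has_vector_derivative Zfun m \<zeta> \<theta> * Ufun m \<zeta> \<theta> j) (at 0)"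
      unfolding Zeq using DALL unfolding Z0 Lsum .
    then show ?thesis unfolding gt_def e_def .
  qed
  have DL: "((\<lambda>t. ln (Re (Zfun m \<zeta> (\<theta> + t *\<^sub>R axis j 1)))) has_real_derivative Re (Ufun m \<zeta> \<theta> j)) (at 0)" for j
    by (rule LD_ln_Re[where Z="\<lambda>t. Zfun m \<zeta> (\<theta> + t *\<^sub>R axis j 1)"]) (use DZ[of j] ImZ ReZ in simp_all)
  show ?thesis using ImZ ReZ RotZ DL ImU RotU SumU G by blast
qed

end
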